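(* Let $u_t+C(t,x)uu_x=A^2(t,x)u_{xx}$ and $\tilde u_{\tilde t}+\tilde C\tilde u\tilde u_{\tilde x}=\tilde A^2\tilde u_{\tilde x\tilde x}$ be two equations of the class $\mathcal L_1$. A point transformation in the space with coordinates $(t,x,u)$ maps the first equation to the second if and only if its components are of the form \[ \tilde t=T(t),\quad \tilde x=X(t,x),\quad \tilde u=U^1u+U^0, \] where $T$ and $X$ are smooth functions of their arguments, $U^0$ and $U^1$ are constants, $T_tX_xU^1\neq0$, the function $X$ satisfies the Kolmogorov equation \[ X_t=A^2X_{xx}+\frac{U^0C}{U^1}X_x, \] and the arbitrary elements are related by $\tilde C=\dfrac{X_x}{T_tU^1}C$, $\tilde A^2=\dfrac{X_x^2}{T_t}A^2$ (left-hand sides evaluated at $(T(t),X(t,x))$).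
   Context: All functions are smooth. $\mathcal L$ denotes the class of equations $u_t+C(t,x)uu_x=A^2(t,x)u_{xx}$ for $u(t,x)$, with arbitrary elements $A^2$, $C$ smooth functions of $(t,x)$ with $A^2C\neq0$ ($A^2$ is the name of a single function). $\mathcal L_1$ is the subclass of $\mathcal L$ singled out by the condition \[ \left(\frac{C_t}{C}-C\left(A^2\frac{C_x}{C^2}\right)_x\right)_x\neq0, \] where $C^2$ is the square of $C$. *)

theory Defs
  imports "HOL-Analysis.Analysis"
begin

definition pt :: "(real \<Rightarrow> real \<Rightarrow> real) \<Rightarrow> real \<Rightarrow> real \<Rightarrow> real" where
  "pt f t x = deriv (\<lambda>s. f s x) t"

definition px :: "(real \<Rightarrow> real \<Rightarrow> real) \<Rightarrow> real \<Rightarrow> real \<Rightarrow> real" where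
  "px f t x = deriv (\<lambda>y. f t y) x"

definition d1 :: "(real \<Rightarrow> real \<Rightarrow> real \<Rightarrow> real) \<Rightarrow> real \<Rightarrow> real \<Rightarrow> real \<Rightarrow> real" where
  "d1 F t x u = deriv (\<lambda>s. F s x u) t"

definition d2 :: "(real \<Rightarrow> real \<Rightarrow> real \<Rightarrow> real) \<Rightarrow> real \<Rightarrow> real \<Rightarrow> real \<Rightarrow> real" where
  "d2 F t x u = deriv (\<lambda>y. F t y u) x"

definition d3 :: "(real \<Rightarrow> real \<Rightarrow> real \<Rightarrow> real) \<Rightarrow> real \<Rightarrow> real \<Rightarrow> real \<Rightarrow> real" where
  "d3 F t x u = deriv (\<lambda>v. F t x v) u"

text \<open>Smoothness (C-infinity): (Frechet) differentiable everywhere, and all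
  first-order partial derivatives are again smooth.\<close>

coinductive smooth1 :: "(real \<Rightarrow> real) \<Rightarrow> bool" where
  "(\<forall>t. f differentiable (at t)) \<Longrightarrow> smooth1 (deriv f) \<Longrightarrow> smooth1 f"

coinductive smooth2 :: "(real \<Rightarrow> real \<Rightarrow> real) \<Rightarrow> bool" where
  "(\<forall>t x. (\<lambda>p. f (fst p) (snd p)) differentiable (at (t, x)))
    \<Longrightarrow> smooth2 (pt f) \<Longrightarrow> smooth2 (px f) \<Longrightarrow> smooth2 f"

coinductive smooth3 :: "(real \<Rightarrow> real \<Rightarrow> real \<Rightarrow> real) \<Rightarrow> bool" where
  "(\<forall>t x u. (\<lambda>p. F (fst p) (fst (snd p)) (snd (snd p))) differentiable (at (t, x, u)))
    \<Longrightarrow> smooth3 (d1 F) \<Longrightarrow> smooth3 (d2 F) \<Longrightarrow> smooth3 (d3 F) \<Longrightarrow> smooth3 F"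

text \<open>Equation u_t + C u u_x = A2 u_xx with arbitrary elements (A2, C);
  A2 is a single function (the square A^2 in the paper).\<close>

definition in_class_L :: "(real \<Rightarrow> real \<Rightarrow> real) \<Rightarrow> (real \<Rightarrow> real \<Rightarrow> real) \<Rightarrow> bool" where
  "in_class_L A2 C \<longleftrightarrow> smooth2 A2 \<and> smooth2 C \<and> (\<forall>t x. A2 t x * C t x \<noteq> 0)"

definition L1_expr :: "(real \<Rightarrow> real \<Rightarrow> real) \<Rightarrow> (real \<Rightarrow> real \<Rightarrow> real) \<Rightarrow> real \<Rightarrow> real \<Rightarrow> real" where
  "L1_expr A2 C = (\<lambda>t x. pt C t x / C t x
      - C t x * px (\<lambda>t' x'. A2 t' x' * px C t' x' / (C t' x')\<^sup>2) t x)"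

definition in_class_L1 :: "(real \<Rightarrow> real \<Rightarrow> real) \<Rightarrow> (real \<Rightarrow> real \<Rightarrow> real) \<Rightarrow> bool" where
  "in_class_L1 A2 C \<longleftrightarrow> in_class_L A2 C \<and> (\<forall>t x. px (L1_expr A2 C) t x \<noteq> 0)"

text \<open>A point of the second-order jet space is (t,x,u,u_t,u_x,u_tt,u_tx,u_xx),
  written (t,x,u,p,q,r,s,w).  The equation E(A2,C) is the manifold
  p + C(t,x) u q = A2(t,x) w.\<close>

definition on_eq :: "(real \<Rightarrow> real \<Rightarrow> real) \<Rightarrow> (real \<Rightarrow> real \<Rightarrow> real)
    \<Rightarrow> real \<Rightarrow> real \<Rightarrow> real \<Rightarrow> real \<Rightarrow> real \<Rightarrow> real \<Rightarrow> bool" where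
  "on_eq A2 C t x u p q w \<longleftrightarrow> p + C t x * u * q = A2 t x * w"

definition Dt where
  "Dt F t x u p = d1 F t x u + p * d3 F t x u"
definition Dx where
  "Dx F t x u q = d2 F t x u + q * d3 F t x u"
definition Dtt where
  "Dtt F t x u p r = d1 (d1 F) t x u + 2 * p * d1 (d3 F) t x u
      + p\<^sup>2 * d3 (d3 F) t x u + r * d3 F t x u"
definition Dtx where
  "Dtx F t x u p q s = d1 (d2 F) t x u + p * d2 (d3 F) t x u + q * d1 (d3 F) t x u
      + p * q * d3 (d3 F) t x u + s * d3 F t x u"
definition Dxx where
  "Dxx F t x u q w = d2 (d2 F) t x u + 2 * q * d2 (d3 F) t x u
      + q\<^sup>2 * d3 (d3 F) t x u + w * d3 F t x u"

definition jacobian3 where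
  "jacobian3 tau xi ups t x u =
      d1 tau t x u * (d2 xi t x u * d3 ups t x u - d3 xi t x u * d2 ups t x u)
    - d2 tau t x u * (d1 xi t x u * d3 ups t x u - d3 xi t x u * d1 ups t x u)
    + d3 tau t x u * (d1 xi t x u * d2 ups t x u - d2 xi t x u * d1 ups t x u)"

definition point_transformation ::
  "(real \<Rightarrow> real \<Rightarrow> real \<Rightarrow> real) \<Rightarrow> (real \<Rightarrow> real \<Rightarrow> real \<Rightarrow> real)
    \<Rightarrow> (real \<Rightarrow> real \<Rightarrow> real \<Rightarrow> real) \<Rightarrow> bool" where
  "point_transformation tau xi ups \<longleftrightarrow> smooth3 tau \<and> smooth3 xi \<and> smooth3 ups \<and>
     (\<forall>t x u. jacobian3 tau xi ups t x u \<noteq> 0)"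

text \<open>Second prolongation, given implicitly by the chain rule: the jet point
  (t',x',u',p',q',r',s',w') is the image of (t,x,u,p,q,r,s,w) under the second
  prolongation of (tau,xi,ups).  The prolongation is defined exactly at those
  jet points where the matrix of total derivatives of (tau,xi) is nonsingular,
  and then the image is uniquely determined by these relations.\<close>

definition prolong_rel where
  "prolong_rel tau xi ups t x u p q r s w t' x' u' p' q' r' s' w' \<longleftrightarrow>
     Dt tau t x u p * Dx xi t x u q - Dx tau t x u q * Dt xi t x u p \<noteq> 0 \<and>
     t' = tau t x u \<and> x' = xi t x u \<and> u' = ups t x u \<and>
     Dt ups t x u p = p' * Dt tau t x u p + q' * Dt xi t x u p \<and>
     Dx ups t x u q = p' * Dx tau t x u q + q' * Dx xi t x u q \<and>
     Dtt ups t x u p r = r' * (Dt tau t x u p)\<^sup>2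
        + 2 * s' * Dt tau t x u p * Dt xi t x u p + w' * (Dt xi t x u p)\<^sup>2
        + p' * Dtt tau t x u p r + q' * Dtt xi t x u p r \<and>
     Dtx ups t x u p q s = r' * Dt tau t x u p * Dx tau t x u q
        + s' * (Dt tau t x u p * Dx xi t x u q + Dx tau t x u q * Dt xi t x u p)
        + w' * Dt xi t x u p * Dx xi t x u q
        + p' * Dtx tau t x u p q s + q' * Dtx xi t x u p q s \<and>
     Dxx ups t x u q w = r' * (Dx tau t x u q)\<^sup>2
        + 2 * s' * Dx tau t x u q * Dx xi t x u q + w' * (Dx xi t x u q)\<^sup>2
        + p' * Dxx tau t x u q w + q' * Dxx xi t x u q w"

text \<open>The point transformation maps the equation E(A2,C) to E(A2',C'):
  its second prolongation maps the manifold E(A2,C) onto E(A2',C')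
  (wherever the prolongation is defined).\<close>

definition maps_eq where
  "maps_eq tau xi ups A2 C A2' C' \<longleftrightarrow>
     (\<forall>t x u p q r s w t' x' u' p' q' r' s' w'.
        prolong_rel tau xi ups t x u p q r s w t' x' u' p' q' r' s' w' \<longrightarrow>
        (on_eq A2 C t x u p q w \<longleftrightarrow> on_eq A2' C' t' x' u' p' q' w'))"

end

theory Submission
  imports Defs
begin


lemma diff3_G:
  assumes "smooth3 F"
  shows "(\<lambda>p. F (fst p) (fst (snd p)) (snd (snd p))) differentiable (at (t, x, u))"
  using assms by (cases rule: smooth3.cases) auto

lemma smooth3_d: assumes "smooth3 F" shows "smooth3 (d1 F)" "smooth3 (d2 F)" "smooth3 (d3 F)"
  using assms by (cases rule: smooth3.cases, auto)+

lemma smooth3_D1: assumes "smooth3 F" shows "((\<lambda>s. F s x u) has_real_derivative d1 F t x u) (at t)"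
proof -
  have "(\<lambda>s. F s x u) = (\<lambda>p. F (fst p) (fst (snd p)) (snd (snd p))) \<circ> (\<lambda>s. (s, x, u))" by auto
  moreover have "(\<lambda>s::real. (s, x, u)) differentiable (at t)" by (auto intro!: derivative_eq_intros simp: differentiable_def)
  ultimately have "(\<lambda>s. F s x u) differentiable (at t)"
    using differentiable_chain_at diff3_G[OF assms] by (metis (no_types, lifting))
  then show ?thesis unfolding d1_def using DERIV_deriv_iff_real_differentiable by blast
qed

lemma smooth3_D2: assumes "smooth3 F" shows "((\<lambda>y. F t y u) has_real_derivative d2 F t x u) (at x)"
proof -
  have "(\<lambda>y. F t y u) = (\<lambda>p. F (fst p) (fst (snd p)) (snd (snd p))) \<circ> (\<lambda>y. (t, y, u))" by auto
  moreover have "(\<lambda>y::real. (t, y, u)) differentiable (at x)" by (auto intro!: derivative_eq_intros simp: differentiable_def)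
  ultimately have "(\<lambda>y. F t y u) differentiable (at x)"
    using differentiable_chain_at diff3_G[OF assms] by (metis (no_types, lifting))
  then show ?thesis unfolding d2_def using DERIV_deriv_iff_real_differentiable by blast
qed

lemma smooth3_D3: assumes "smooth3 F" shows "((\<lambda>v. F t x v) has_real_derivative d3 F t x u) (at u)"
proof -
  have "(\<lambda>v. F t x v) = (\<lambda>p. F (fst p) (fst (snd p)) (snd (snd p))) \<circ> (\<lambda>v. (t, x, v))" by auto
  moreover have "(\<lambda>v::real. (t, x, v)) differentiable (at u)" by (auto intro!: derivative_eq_intros simp: differentiable_def)
  ultimately have "(\<lambda>v. F t x v) differentiable (at u)"
    using differentiable_chain_at diff3_G[OF assms] by (metis (no_types, lifting))
  then show ?thesis unfolding d3_def using DERIV_deriv_iff_real_differentiable by blast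
qed

lemma diff2_G:
  assumes "smooth2 f"
  shows "(\<lambda>p. f (fst p) (snd p)) differentiable (at (t, x))"
  using assms by (cases rule: smooth2.cases) auto

lemma smooth2_d: assumes "smooth2 f" shows "smooth2 (pt f)" "smooth2 (px f)"
  using assms by (cases rule: smooth2.cases, auto)+

lemma smooth2_Dt: assumes "smooth2 f" shows "((\<lambda>s. f s x) has_real_derivative pt f t x) (at t)"
proof -
  have "(\<lambda>s. f s x) = (\<lambda>p. f (fst p) (snd p)) \<circ> (\<lambda>s. (s, x))" by auto
  moreover have "(\<lambda>s::real. (s, x)) differentiable (at t)" by (auto intro!: derivative_eq_intros simp: differentiable_def)
  ultimately have "(\<lambda>s. f s x) differentiable (at t)"
    using differentiable_chain_at diff2_G[OF assms] by (metis (no_types, lifting))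
  then show ?thesis unfolding pt_def using DERIV_deriv_iff_real_differentiable by blast
qed

lemma smooth2_Dx: assumes "smooth2 f" shows "((\<lambda>y. f t y) has_real_derivative px f t x) (at x)"
proof -
  have "(\<lambda>y. f t y) = (\<lambda>p. f (fst p) (snd p)) \<circ> (\<lambda>y. (t, y))" by auto
  moreover have "(\<lambda>y::real. (t, y)) differentiable (at x)" by (auto intro!: derivative_eq_intros simp: differentiable_def)
  ultimately have "(\<lambda>y. f t y) differentiable (at x)"
    using differentiable_chain_at diff2_G[OF assms] by (metis (no_types, lifting))
  then show ?thesis unfolding px_def using DERIV_deriv_iff_real_differentiable by blast
qed

lemma smooth2_cont: assumes "smooth2 f" shows "continuous (at (t, x)) (\<lambda>p. f (fst p) (snd p))"
  using diff2_G[OF assms] differentiable_imp_continuous_within by blast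

lemma smooth3_smooth2: assumes "smooth3 F" shows "smooth2 (\<lambda>t x. F t x c)"
proof -
  have "\<exists>F. smooth3 F \<and> f = (\<lambda>t x. F t x c)" if "f = (\<lambda>t x. F t x c)" for f using assms that by blast
  moreover have "smooth2 f" if "\<exists>F. smooth3 F \<and> f = (\<lambda>t x. F t x c)" for f
    using that
  proof (coinduction arbitrary: f)
    case (smooth2 f)
    then obtain G where G: "smooth3 G" "f = (\<lambda>t x. G t x c)" by blast
    have "(\<lambda>p. f (fst p) (snd p)) differentiable (at (t, x))" for t x
    proof -
      have "(\<lambda>p. f (fst p) (snd p)) = (\<lambda>p. G (fst p) (fst (snd p)) (snd (snd p))) \<circ> (\<lambda>p. (fst p, snd p, c))"
        using G by auto
      moreover have "(\<lambda>p::real*real. (fst p, snd p, c)) differentiable (at (t, x))"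
        by (auto intro!: derivative_eq_intros simp: differentiable_def)
      ultimately show ?thesis using differentiable_chain_at diff3_G[OF G(1)] by (metis (no_types, lifting) fst_conv snd_conv)
    qed
    moreover have "pt f = (\<lambda>t x. d1 G t x c)" "px f = (\<lambda>t x. d2 G t x c)"
      using G by (auto intro!: ext simp: pt_def px_def d1_def d2_def)
    ultimately show ?case using smooth3_d[OF G(1)] by blast
  qed
  ultimately show ?thesis by blast
qed

lemma smooth3_smooth1: assumes "smooth3 F" shows "smooth1 (\<lambda>t. F t a b)"
proof -
  have "smooth1 f" if "\<exists>F. smooth3 F \<and> f = (\<lambda>t. F t a b)" for f
    using that
  proof (coinduction arbitrary: f)
    case (smooth1 f)
    then obtain G where G: "smooth3 G" "f = (\<lambda>t. G t a b)" by blast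
    have "f differentiable (at t)" for t
      using smooth3_D1[OF G(1)] G(2) real_differentiable_def by blast
    moreover have "deriv f = (\<lambda>t. d1 G t a b)"
      using G by (auto simp: d1_def)
    ultimately show ?case using smooth3_d[OF G(1)] by blast
  qed
  then show ?thesis using assms by blast
qed

lemma const_fun: fixes f :: "real \<Rightarrow> real" assumes "\<And>y. (f has_real_derivative 0) (at y)" shows "f a = f b"
  using DERIV_isconst_all assms by blast

lemma dist_pair_le: "dist (a::real, b::real) (c, d) \<le> \<bar>a - c\<bar> + \<bar>b - d\<bar>"
proof -
  have "dist (a, b) (c, d) = norm (a - c, b - d)" by (simp add: dist_norm)
  also have "\<dots> \<le> norm (a - c) + norm (b - d)" by (rule norm_Pair_le)
  finally show ?thesis by simp
qed

lemma clairaut_aux: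
  assumes f: "smooth2 f" and k: "k > 0"
  shows "\<exists>s1 y1 s2 y2. \<bar>s1 - t\<bar> \<le> k \<and> \<bar>y1 - x\<bar> \<le> k \<and> \<bar>s2 - t\<bar> \<le> k \<and> \<bar>y2 - x\<bar> \<le> k
     \<and> px (pt f) s1 y1 = pt (px f) s2 y2"
proof -
  have g: "smooth2 (px f)" and h: "smooth2 (pt f)" using smooth2_d[OF f] by auto
  have "\<exists>s1. t < s1 \<and> s1 < t + k \<and> (f (t+k) (x+k) - f (t+k) x) - (f t (x+k) - f t x)
      = (t + k - t) * (pt f s1 (x+k) - pt f s1 x)"
    by (rule MVT2) (use k in \<open>auto intro!: DERIV_diff smooth2_Dt[OF f]\<close>)
  then obtain s1 where s1: "t < s1" "s1 < t + k" and e1: "(f (t+k) (x+k) - f (t+k) x) - (f t (x+k) - f t x)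
      = k * (pt f s1 (x+k) - pt f s1 x)" by auto
  have "\<exists>y1. x < y1 \<and> y1 < x + k \<and> pt f s1 (x+k) - pt f s1 x = (x + k - x) * px (pt f) s1 y1"
    by (rule MVT2) (use k in \<open>auto intro!: smooth2_Dx[OF h]\<close>)
  then obtain y1 where y1: "x < y1" "y1 < x + k" and e2: "pt f s1 (x+k) - pt f s1 x = k * px (pt f) s1 y1"
    by auto
  have "\<exists>y2. x < y2 \<and> y2 < x + k \<and> (f (t+k) (x+k) - f t (x+k)) - (f (t+k) x - f t x)
      = (x + k - x) * (px f (t+k) y2 - px f t y2)"
    by (rule MVT2) (use k in \<open>auto intro!: DERIV_diff smooth2_Dx[OF f]\<close>)
  then obtain y2 where y2: "x < y2" "y2 < x + k" and e3: "(f (t+k) (x+k) - f t (x+k)) - (f (t+k) x - f t x)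
      = k * (px f (t+k) y2 - px f t y2)" by auto
  have "\<exists>s2. t < s2 \<and> s2 < t + k \<and> px f (t+k) y2 - px f t y2 = (t + k - t) * pt (px f) s2 y2"
    by (rule MVT2) (use k in \<open>auto intro!: smooth2_Dt[OF g]\<close>)
  then obtain s2 where s2: "t < s2" "s2 < t + k" and e4: "px f (t+k) y2 - px f t y2 = k * pt (px f) s2 y2"
    by auto
  have "k * (k * px (pt f) s1 y1) = k * (k * pt (px f) s2 y2)"
    using e1 e2 e3 e4 by (simp add: algebra_simps)
  then have "px (pt f) s1 y1 = pt (px f) s2 y2" using k by simp
  then show ?thesis using s1 y1 s2 y2 by (intro exI[of _ s1] exI[of _ y1] exI[of _ s2] exI[of _ y2]) auto
qed

lemma clairaut:
  assumes f: "smooth2 f"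
  shows "pt (px f) t x = px (pt f) t x"
proof (rule ccontr)
  assume ne: "pt (px f) t x \<noteq> px (pt f) t x"
  define e where "e = \<bar>pt (px f) t x - px (pt f) t x\<bar> / 2"
  have e: "e > 0" using ne by (simp add: e_def)
  have cG: "continuous (at (t, x)) (\<lambda>p. pt (px f) (fst p) (snd p))"
    by (rule smooth2_cont) (use smooth2_d[OF f] smooth2_d in blast)
  have cH: "continuous (at (t, x)) (\<lambda>p. px (pt f) (fst p) (snd p))"
    by (rule smooth2_cont) (use smooth2_d[OF f] smooth2_d in blast)
  obtain d1 where d1: "d1 > 0" "\<And>p. dist p (t, x) < d1 \<Longrightarrow> dist (pt (px f) (fst p) (snd p)) (pt (px f) t x) < e"
    using cG e unfolding continuous_at_eps_delta by (metis fst_conv snd_conv)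
  obtain d2 where d2: "d2 > 0" "\<And>p. dist p (t, x) < d2 \<Longrightarrow> dist (px (pt f) (fst p) (snd p)) (px (pt f) t x) < e"
    using cH e unfolding continuous_at_eps_delta by (metis fst_conv snd_conv)
  define k where "k = min d1 d2 / 4"
  have k: "k > 0" using d1 d2 by (simp add: k_def)
  obtain s1 y1 s2 y2 where b: "\<bar>s1 - t\<bar> \<le> k" "\<bar>y1 - x\<bar> \<le> k" "\<bar>s2 - t\<bar> \<le> k" "\<bar>y2 - x\<bar> \<le> k"
    and eq: "px (pt f) s1 y1 = pt (px f) s2 y2"
    using clairaut_aux[OF f k, of t x] by blast
  have "dist (s1, y1) (t, x) < d2" using dist_pair_le[of s1 y1 t x] b d1 d2 by (simp add: k_def)
  then have a1: "\<bar>px (pt f) s1 y1 - px (pt f) t x\<bar> < e" using d2(2)[of "(s1, y1)"] by (simp add: dist_real_def)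
  have "dist (s2, y2) (t, x) < d1" using dist_pair_le[of s2 y2 t x] b d1 d2 by (simp add: k_def)
  then have a2: "\<bar>pt (px f) s2 y2 - pt (px f) t x\<bar> < e" using d1(2)[of "(s2, y2)"] by (simp add: dist_real_def)
  show False using a1 a2 eq e_def by (simp add: abs_if split: if_split_asm)
qed



lemma alg2:
  fixes a b c d A B :: real
  assumes D: "a * d - c * b \<noteq> 0"
  shows "A = ((A * d - b * B)/(a * d - c * b)) * a + ((a * B - c * A)/(a * d - c * b)) * b"
    and "B = ((A * d - b * B)/(a * d - c * b)) * c + ((a * B - c * A)/(a * d - c * b)) * d"
proof -
  have h: "inverse (a * d - c * b) * (a * d - c * b) = 1" using D by simp
  show "A = ((A * d - b * B)/(a * d - c * b)) * a + ((a * B - c * A)/(a * d - c * b)) * b"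
    unfolding divide_inverse using h by algebra
  show "B = ((A * d - b * B)/(a * d - c * b)) * c + ((a * B - c * A)/(a * d - c * b)) * d"
    unfolding divide_inverse using h by algebra
qed

lemma alg3:
  fixes a b c d Ha Hb Hc :: real
  assumes D: "a * d - c * b \<noteq> 0"
  shows "Ha = ((d\<^sup>2 * Ha - 2 * b * d * Hb + b\<^sup>2 * Hc)/(a * d - c * b)\<^sup>2) * a\<^sup>2
      + 2 * ((- c * d * Ha + (a * d + b * c) * Hb - a * b * Hc)/(a * d - c * b)\<^sup>2) * a * b
      + ((c\<^sup>2 * Ha - 2 * a * c * Hb + a\<^sup>2 * Hc)/(a * d - c * b)\<^sup>2) * b\<^sup>2" (is ?g1)
    and "Hb = ((d\<^sup>2 * Ha - 2 * b * d * Hb + b\<^sup>2 * Hc)/(a * d - c * b)\<^sup>2) * a * c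
      + ((- c * d * Ha + (a * d + b * c) * Hb - a * b * Hc)/(a * d - c * b)\<^sup>2) * (a * d + c * b)
      + ((c\<^sup>2 * Ha - 2 * a * c * Hb + a\<^sup>2 * Hc)/(a * d - c * b)\<^sup>2) * b * d" (is ?g2)
    and "Hc = ((d\<^sup>2 * Ha - 2 * b * d * Hb + b\<^sup>2 * Hc)/(a * d - c * b)\<^sup>2) * c\<^sup>2
      + 2 * ((- c * d * Ha + (a * d + b * c) * Hb - a * b * Hc)/(a * d - c * b)\<^sup>2) * c * d
      + ((c\<^sup>2 * Ha - 2 * a * c * Hb + a\<^sup>2 * Hc)/(a * d - c * b)\<^sup>2) * d\<^sup>2" (is ?g3)
proof -
  have h: "inverse ((a * d - c * b)\<^sup>2) * (a * d - c * b)\<^sup>2 = 1" using D by simp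
  show ?g1 unfolding divide_inverse using h by algebra
  show ?g2 unfolding divide_inverse using h by algebra
  show ?g3 unfolding divide_inverse using h by algebra
qed

definition Dj where
  "Dj tau xi t x u p q = Dt tau t x u p * Dx xi t x u q - Dx tau t x u q * Dt xi t x u p"
definition iP where
  "iP tau xi ups t x u p q = (Dt ups t x u p * Dx xi t x u q - Dt xi t x u p * Dx ups t x u q) / Dj tau xi t x u p q"
definition iQ where
  "iQ tau xi ups t x u p q = (Dt tau t x u p * Dx ups t x u q - Dx tau t x u q * Dt ups t x u p) / Dj tau xi t x u p q"
definition iH1 where
  "iH1 tau xi ups t x u p q r = Dtt ups t x u p r - iP tau xi ups t x u p q * Dtt tau t x u p r
     - iQ tau xi ups t x u p q * Dtt xi t x u p r"
definition iH2 where
  "iH2 tau xi ups t x u p q s = Dtx ups t x u p q s - iP tau xi ups t x u p q * Dtx tau t x u p q s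
     - iQ tau xi ups t x u p q * Dtx xi t x u p q s"
definition iH3 where
  "iH3 tau xi ups t x u p q w = Dxx ups t x u q w - iP tau xi ups t x u p q * Dxx tau t x u q w
     - iQ tau xi ups t x u p q * Dxx xi t x u q w"
definition iR where
  "iR tau xi ups t x u p q r s w = ((Dx xi t x u q)\<^sup>2 * iH1 tau xi ups t x u p q r
     - 2 * Dt xi t x u p * Dx xi t x u q * iH2 tau xi ups t x u p q s
     + (Dt xi t x u p)\<^sup>2 * iH3 tau xi ups t x u p q w) / (Dj tau xi t x u p q)\<^sup>2"
definition iS where
  "iS tau xi ups t x u p q r s w = (- Dx tau t x u q * Dx xi t x u q * iH1 tau xi ups t x u p q r
     + (Dt tau t x u p * Dx xi t x u q + Dt xi t x u p * Dx tau t x u q) * iH2 tau xi ups t x u p q s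
     - Dt tau t x u p * Dt xi t x u p * iH3 tau xi ups t x u p q w) / (Dj tau xi t x u p q)\<^sup>2"
definition iW where
  "iW tau xi ups t x u p q r s w = ((Dx tau t x u q)\<^sup>2 * iH1 tau xi ups t x u p q r
     - 2 * Dt tau t x u p * Dx tau t x u q * iH2 tau xi ups t x u p q s
     + (Dt tau t x u p)\<^sup>2 * iH3 tau xi ups t x u p q w) / (Dj tau xi t x u p q)\<^sup>2"

lemma img:
  assumes "Dj tau xi t x u p q \<noteq> 0"
  shows "prolong_rel tau xi ups t x u p q r s w (tau t x u) (xi t x u) (ups t x u)
     (iP tau xi ups t x u p q) (iQ tau xi ups t x u p q) (iR tau xi ups t x u p q r s w)
     (iS tau xi ups t x u p q r s w) (iW tau xi ups t x u p q r s w)"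
proof -
  define a where "a = Dt tau t x u p"
  define b where "b = Dt xi t x u p"
  define c where "c = Dx tau t x u q"
  define d where "d = Dx xi t x u q"
  have D: "a * d - c * b \<noteq> 0" using assms by (simp add: Dj_def a_def b_def c_def d_def)
  have DD: "Dj tau xi t x u p q = a * d - c * b" by (simp add: Dj_def a_def b_def c_def d_def)
  note e2 = alg2[OF D, where A="Dt ups t x u p" and B="Dx ups t x u q"]
  note e3 = alg3[OF D, where Ha="iH1 tau xi ups t x u p q r" and Hb="iH2 tau xi ups t x u p q s" and Hc="iH3 tau xi ups t x u p q w"]
  have P: "iP tau xi ups t x u p q = (Dt ups t x u p * d - b * Dx ups t x u q) / (a * d - c * b)"
    by (simp add: iP_def DD b_def d_def)
  have Q: "iQ tau xi ups t x u p q = (a * Dx ups t x u q - c * Dt ups t x u p) / (a * d - c * b)"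
    by (simp add: iQ_def DD a_def c_def)
  have R: "iR tau xi ups t x u p q r s w = (d\<^sup>2 * iH1 tau xi ups t x u p q r - 2 * b * d * iH2 tau xi ups t x u p q s + b\<^sup>2 * iH3 tau xi ups t x u p q w) / (a * d - c * b)\<^sup>2"
    by (simp add: iR_def DD b_def d_def)
  have S: "iS tau xi ups t x u p q r s w = (- c * d * iH1 tau xi ups t x u p q r + (a * d + b * c) * iH2 tau xi ups t x u p q s - a * b * iH3 tau xi ups t x u p q w) / (a * d - c * b)\<^sup>2"
    by (simp add: iS_def DD a_def b_def c_def d_def)
  have W: "iW tau xi ups t x u p q r s w = (c\<^sup>2 * iH1 tau xi ups t x u p q r - 2 * a * c * iH2 tau xi ups t x u p q s + a\<^sup>2 * iH3 tau xi ups t x u p q w) / (a * d - c * b)\<^sup>2"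
    by (simp add: iW_def DD a_def c_def)
  show ?thesis
    unfolding prolong_rel_def
    apply (intro conjI)
    subgoal using assms by (simp add: Dj_def)
    subgoal by simp
    subgoal by simp
    subgoal by simp
    subgoal using e2(1) unfolding P Q a_def b_def c_def d_def by simp
    subgoal using e2(2) unfolding P Q a_def b_def c_def d_def by simp
    subgoal using e3(1) unfolding R S W a_def b_def c_def d_def iH1_def by (simp add: algebra_simps)
    subgoal using e3(2) unfolding R S W a_def b_def c_def d_def iH2_def by (simp add: algebra_simps)
    subgoal using e3(3) unfolding R S W a_def b_def c_def d_def iH3_def by (simp add: algebra_simps)
    done
qed



lemma kappa_eq:
  assumes "Dj tau xi t x u p q \<noteq> 0"
  shows "(d3 ups t x u - iP tau xi ups t x u p q * d3 tau t x u - iQ tau xi ups t x u p q * d3 xi t x u)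
     * Dj tau xi t x u p q = jacobian3 tau xi ups t x u"
proof -
  have h: "inverse (Dj tau xi t x u p q) * Dj tau xi t x u p q = 1" using assms by simp
  show ?thesis
    using h unfolding iP_def iQ_def divide_inverse
    by (simp add: jacobian3_def Dj_def Dt_def Dx_def) algebra
qed

lemma Dtt_r: "Dtt F t x u p r = Dtt F t x u p 0 + r * d3 F t x u" by (simp add: Dtt_def)
lemma Dtx_s: "Dtx F t x u p q s = Dtx F t x u p q 0 + s * d3 F t x u" by (simp add: Dtx_def)
lemma Dxx_w: "Dxx F t x u q w = Dxx F t x u q 0 + w * d3 F t x u" by (simp add: Dxx_def)

definition Xof :: "(real \<Rightarrow> real \<Rightarrow> real \<Rightarrow> real) \<Rightarrow> real \<Rightarrow> real \<Rightarrow> real" where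
  "Xof f t x = f t x 0"

definition U1of :: "(real \<Rightarrow> real \<Rightarrow> real \<Rightarrow> real) \<Rightarrow> real \<Rightarrow> real \<Rightarrow> real" where
  "U1of f t x = d3 f t x 0"

definition U0of :: "(real \<Rightarrow> real \<Rightarrow> real \<Rightarrow> real) \<Rightarrow> real \<Rightarrow> real \<Rightarrow> real" where
  "U0of f t x = f t x 0"

definition Tof :: "(real \<Rightarrow> real \<Rightarrow> real \<Rightarrow> real) \<Rightarrow> real \<Rightarrow> real" where
  "Tof f t = f t 0 0"

context
  fixes A2 C A2' C' :: "real \<Rightarrow> real \<Rightarrow> real"
    and tau xi ups :: "real \<Rightarrow> real \<Rightarrow> real \<Rightarrow> real"
  assumes L: "in_class_L1 A2 C" and L': "in_class_L1 A2' C'"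
    and PT: "point_transformation tau xi ups"
    and ME: "maps_eq tau xi ups A2 C A2' C'"
begin

lemma A2nz: "A2 t x \<noteq> 0" and Cnz: "C t x \<noteq> 0" and A2'nz: "A2' t x \<noteq> 0" and C'nz: "C' t x \<noteq> 0"
  using L L' by (auto simp: in_class_L1_def in_class_L_def)

lemma Jnz: "jacobian3 tau xi ups t x u \<noteq> 0"
  using PT by (simp add: point_transformation_def)

lemma main_equiv:
  assumes "Dj tau xi t x u p q \<noteq> 0"
  shows "on_eq A2 C t x u p q w \<longleftrightarrow> on_eq A2' C' (tau t x u) (xi t x u) (ups t x u)
     (iP tau xi ups t x u p q) (iQ tau xi ups t x u p q) (iW tau xi ups t x u p q r s w)"
  using ME img[OF assms] unfolding maps_eq_def by blast

lemma on_eq_w0: "on_eq A2 C t x u p q ((p + C t x * u * q) / A2 t x)"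
  using A2nz[of t x] by (simp add: on_eq_def)

lemma F1:
  assumes D: "Dj tau xi t x u p q \<noteq> 0"
  shows "Dx tau t x u q = 0"
proof -
  define w0 where "w0 = (p + C t x * u * q) / A2 t x"
  define K where "K = d3 ups t x u - iP tau xi ups t x u p q * d3 tau t x u - iQ tau xi ups t x u p q * d3 xi t x u"
  have K: "K \<noteq> 0" using kappa_eq[OF D, of ups] Jnz[of t x u] unfolding K_def by auto
  have e0: "on_eq A2' C' (tau t x u) (xi t x u) (ups t x u)
     (iP tau xi ups t x u p q) (iQ tau xi ups t x u p q) (iW tau xi ups t x u p q 0 0 w0)"
    using main_equiv[OF D] on_eq_w0 unfolding w0_def by blast
  have e1: "on_eq A2' C' (tau t x u) (xi t x u) (ups t x u)
     (iP tau xi ups t x u p q) (iQ tau xi ups t x u p q) (iW tau xi ups t x u p q 1 0 w0)"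
    using main_equiv[OF D] on_eq_w0 unfolding w0_def by blast
  have "iW tau xi ups t x u p q 1 0 w0 = iW tau xi ups t x u p q 0 0 w0"
    using e0 e1 A2'nz[of "tau t x u" "xi t x u"] unfolding on_eq_def by simp
  then have "(Dx tau t x u q)\<^sup>2 * K / (Dj tau xi t x u p q)\<^sup>2 = 0"
    unfolding iW_def iH1_def K_def
    by (simp add: Dtt_r[where r=1] field_simps; blast)
  then show ?thesis using K D by simp
qed

lemma Dj_expand: "Dj tau xi t x u p q =
   (d1 tau t x u * d2 xi t x u - d2 tau t x u * d1 xi t x u)
   + q * (d1 tau t x u * d3 xi t x u - d3 tau t x u * d1 xi t x u)
   + p * (d3 tau t x u * d2 xi t x u - d2 tau t x u * d3 xi t x u)"
  by (simp add: Dj_def Dt_def Dx_def algebra_simps)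

lemma J_expand: "jacobian3 tau xi ups t x u =
   d3 ups t x u * (d1 tau t x u * d2 xi t x u - d2 tau t x u * d1 xi t x u)
   - d2 ups t x u * (d1 tau t x u * d3 xi t x u - d3 tau t x u * d1 xi t x u)
   - d1 ups t x u * (d3 tau t x u * d2 xi t x u - d2 tau t x u * d3 xi t x u)"
  by (simp add: jacobian3_def algebra_simps)

lemma F1':
  shows "d2 tau t x u = 0 \<and> d3 tau t x u = 0"
proof -
  define m1 where "m1 = d1 tau t x u * d2 xi t x u - d2 tau t x u * d1 xi t x u"
  define m2 where "m2 = d1 tau t x u * d3 xi t x u - d3 tau t x u * d1 xi t x u"
  define m3 where "m3 = d3 tau t x u * d2 xi t x u - d2 tau t x u * d3 xi t x u"
  have DJ: "Dj tau xi t x u p q = m1 + q * m2 + p * m3" for p q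
    unfolding m1_def m2_def m3_def by (rule Dj_expand)
  have nz: "\<not> (m1 = 0 \<and> m2 = 0 \<and> m3 = 0)"
    using Jnz[of t x u] unfolding J_expand m1_def m2_def m3_def by auto
  have good: "d2 tau t x u + q * d3 tau t x u = 0" if hq: "m1 + q * m2 \<noteq> 0 \<or> m3 \<noteq> 0" for q
  proof -
    obtain p where "Dj tau xi t x u p q \<noteq> 0"
    proof (cases "m3 = 0")
      case True
      then show ?thesis using hq DJ[of 0 q] by (intro that[of 0]) auto
    next
      case False
      then show ?thesis using DJ[of "(1 - m1 - q * m2) / m3" q] by (intro that[of "(1 - m1 - q * m2) / m3"]) (simp add: field_simps)
    qed
    from F1[OF this] show ?thesis by (simp add: Dx_def)
  qed
  show ?thesis
  proof (cases "m3 = 0")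
    case False
    then show ?thesis using good[of 0] good[of 1] by auto
  next
    case True
    show ?thesis
    proof (cases "m1 = 0")
      case True
      then have "m2 \<noteq> 0" using nz \<open>m3 = 0\<close> by auto
      then show ?thesis using good[of 1] good[of 2] True by auto
    next
      case False
      then have g0: "d2 tau t x u = 0" using good[of 0] by auto
      have "m1 + 1 * m2 \<noteq> 0 \<or> m1 + 2 * m2 \<noteq> 0" using False by auto
      then show ?thesis using good[of 1] good[of 2] g0 by auto
    qed
  qed
qed

lemma smooth_tau: "smooth3 tau" and smooth_xi: "smooth3 xi" and smooth_ups: "smooth3 ups"
  using PT by (auto simp: point_transformation_def)

lemma tau_form: "tau = (\<lambda>t x u. tau t 0 0)"
proof (intro ext)
  fix t x u
  have "tau t x u = tau t 0 u"
    using const_fun[of "\<lambda>y. tau t y u" x 0] smooth3_D2[OF smooth_tau] F1' by metis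
  also have "\<dots> = tau t 0 0"
    using const_fun[of "\<lambda>v. tau t 0 v" u 0] smooth3_D3[OF smooth_tau] F1' by metis
  finally show "tau t x u = tau t 0 0" .
qed


lemma tauT: "tau t x u = (Tof tau) t"
proof -
  have "tau t x u = tau t 0 0" by (rule fun_cong[OF fun_cong[OF fun_cong[OF tau_form]], simplified])
  then show ?thesis unfolding Tof_def by simp
qed


lemma tau_d1: "d1 tau t x u = deriv (Tof tau) t"
proof -
  have "(\<lambda>s. tau s x u) = (Tof tau)" using tauT by (intro ext) simp
  then show ?thesis unfolding d1_def by simp
qed

lemma tau_d2: "d2 tau = (\<lambda>t x u. 0)"
proof (intro ext)
  fix t x u
  have "(\<lambda>y. tau t y u) = (\<lambda>y. (Tof tau) t)" using tauT by (intro ext) simp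
  then show "d2 tau t x u = 0" unfolding d2_def by simp
qed

lemma tau_d3: "d3 tau = (\<lambda>t x u. 0)"
proof (intro ext)
  fix t x u
  have "(\<lambda>v. tau t x v) = (\<lambda>v. (Tof tau) t)" using tauT by (intro ext) simp
  then show "d3 tau t x u = 0" unfolding d3_def by simp
qed

lemma tau_D: "Dt tau t x u p = deriv (Tof tau) t" "Dx tau t x u q = 0" "Dxx tau t x u q w = 0"
  by (simp_all add: Dt_def Dx_def Dxx_def tau_d1 tau_d2 tau_d3 d2_def d3_def)

lemma J_T: "jacobian3 tau xi ups t x u = deriv (Tof tau) t * (d2 xi t x u * d3 ups t x u - d3 xi t x u * d2 ups t x u)"
  by (simp add: jacobian3_def tau_d1 tau_d2 tau_d3)

lemma Tnz: "deriv (Tof tau) t \<noteq> 0" and J2nz: "d2 xi t x u * d3 ups t x u - d3 xi t x u * d2 ups t x u \<noteq> 0"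
  using Jnz[of t x u] unfolding J_T by auto

lemma Dj_T: "Dj tau xi t x u p q = deriv (Tof tau) t * Dx xi t x u q"
  by (simp add: Dj_def tau_D)

lemma iP_T: "iP tau xi ups t x u p q = (Dt ups t x u p * Dx xi t x u q - Dt xi t x u p * Dx ups t x u q) / (deriv (Tof tau) t * Dx xi t x u q)"
  by (simp add: iP_def Dj_T)

lemma iQ_T: "Dx xi t x u q \<noteq> 0 \<Longrightarrow> iQ tau xi ups t x u p q = Dx ups t x u q / Dx xi t x u q"
  using Tnz[of t] by (simp add: iQ_def Dj_T tau_D)


lemma iW_T: "Dx xi t x u q \<noteq> 0 \<Longrightarrow> iW tau xi ups t x u p q r s w =
   (Dxx ups t x u q w - iQ tau xi ups t x u p q * Dxx xi t x u q w) / (Dx xi t x u q)\<^sup>2"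
proof -
  assume d: "Dx xi t x u q \<noteq> 0"
  have a: "deriv (Tof tau) t \<noteq> 0" by (rule Tnz)
  have "iW tau xi ups t x u p q r s w = (deriv (Tof tau) t)\<^sup>2 * iH3 tau xi ups t x u p q w / (deriv (Tof tau) t * Dx xi t x u q)\<^sup>2"
    unfolding iW_def Dj_T tau_D by simp
  also have "\<dots> = iH3 tau xi ups t x u p q w / (Dx xi t x u q)\<^sup>2"
    using a by (simp add: power_mult_distrib)
  finally show ?thesis unfolding iH3_def tau_D by simp
qed

lemma F3:
  assumes d: "Dx xi t x u q \<noteq> 0"
  shows "(Dx xi t x u q)\<^sup>2 * A2 t x = deriv (Tof tau) t * A2' ((Tof tau) t) (xi t x u)"
proof -
  have D: "Dj tau xi t x u p q \<noteq> 0" for p using d Tnz[of t] by (simp add: Dj_T)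
  define w0 where "w0 p = (p + C t x * u * q) / A2 t x" for p
  have E: "iP tau xi ups t x u p q + C' ((Tof tau) t) (xi t x u) * ups t x u * iQ tau xi ups t x u p q
      = A2' ((Tof tau) t) (xi t x u) * iW tau xi ups t x u p q 0 0 (w0 p)" for p
    using main_equiv[OF D[of p], where w="w0 p" and r=0 and s=0] on_eq_w0[of t x u p q] unfolding w0_def on_eq_def tauT[of t x u] by blast
  define a where "a = deriv (Tof tau) t"
  define dd where "dd = Dx xi t x u q"
  define Q where "Q = Dx ups t x u q / dd"
  define k where "k = d3 ups t x u - Q * d3 xi t x u"
  have a: "a \<noteq> 0" using Tnz unfolding a_def by auto
  have dd: "dd \<noteq> 0" using d unfolding dd_def by auto
  have kd: "dd * k = d2 xi t x u * d3 ups t x u - d3 xi t x u * d2 ups t x u"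
  proof -
    have "dd * k = dd * d3 ups t x u - Dx ups t x u q * d3 xi t x u"
      unfolding k_def Q_def using dd by (simp add: algebra_simps)
    then show ?thesis unfolding dd_def Dx_def by (simp add: algebra_simps)
  qed
  have k: "k \<noteq> 0" using kd J2nz[of t x u] by auto
  have P1: "iP tau xi ups t x u 1 q - iP tau xi ups t x u 0 q = dd * k / (a * dd)"
  proof -
    have "iP tau xi ups t x u 1 q - iP tau xi ups t x u 0 q
       = ((Dt ups t x u 1 - Dt ups t x u 0) * dd - (Dt xi t x u 1 - Dt xi t x u 0) * Dx ups t x u q) / (a * dd)"
      unfolding iP_T a_def[symmetric] dd_def[symmetric] using a dd by (simp add: field_simps)
    also have "\<dots> = (d3 ups t x u * dd - d3 xi t x u * Dx ups t x u q) / (a * dd)"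
      by (simp add: Dt_def)
    also have "d3 ups t x u * dd - d3 xi t x u * Dx ups t x u q = dd * k"
      unfolding k_def Q_def using dd by (simp add: algebra_simps)
    finally show ?thesis .
  qed
  have W1: "iW tau xi ups t x u 1 q 0 0 (w0 1) - iW tau xi ups t x u 0 q 0 0 (w0 0) = k / (A2 t x * dd\<^sup>2)"
  proof -
    have "iW tau xi ups t x u 1 q 0 0 (w0 1) - iW tau xi ups t x u 0 q 0 0 (w0 0)
      = ((Dxx ups t x u q (w0 1) - Dxx ups t x u q (w0 0)) - Q * (Dxx xi t x u q (w0 1) - Dxx xi t x u q (w0 0))) / dd\<^sup>2"
      unfolding iW_T[OF d] iQ_T[OF d] dd_def[symmetric] Q_def[symmetric] using dd by (simp add: field_simps)
    also have "(Dxx ups t x u q (w0 1) - Dxx ups t x u q (w0 0)) - Q * (Dxx xi t x u q (w0 1) - Dxx xi t x u q (w0 0))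
       = (w0 1 - w0 0) * k"
      unfolding k_def by (simp add: Dxx_def algebra_simps)
    also have "w0 1 - w0 0 = 1 / A2 t x" unfolding w0_def by (simp add: diff_divide_distrib[symmetric])
    finally show ?thesis by simp
  qed
  have "dd * k / (a * dd) = A2' ((Tof tau) t) (xi t x u) * (k / (A2 t x * dd\<^sup>2))"
  proof -
    have "iP tau xi ups t x u 1 q - iP tau xi ups t x u 0 q = A2' ((Tof tau) t) (xi t x u) *
       (iW tau xi ups t x u 1 q 0 0 (w0 1) - iW tau xi ups t x u 0 q 0 0 (w0 0))"
      using E[of 1] E[of 0] iQ_T[OF d, of 1] iQ_T[OF d, of 0] by (simp add: right_diff_distrib)
    then show ?thesis unfolding P1 W1 .
  qed
  then have "k / a = A2' ((Tof tau) t) (xi t x u) * k / (A2 t x * dd\<^sup>2)"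
    using dd by simp
  then have "k * (A2 t x * dd\<^sup>2) = A2' ((Tof tau) t) (xi t x u) * k * a"
    using a dd A2nz[of t x] by (simp add: field_simps)
  then show ?thesis using k unfolding a_def dd_def by (simp add: algebra_simps)
qed

lemma xi_u0: "d3 xi t x u = 0"
proof (rule ccontr)
  assume e: "d3 xi t x u \<noteq> 0"
  define q1 where "q1 = (1 - d2 xi t x u) / d3 xi t x u"
  define q2 where "q2 = (2 - d2 xi t x u) / d3 xi t x u"
  have 1: "Dx xi t x u q1 = 1" unfolding q1_def Dx_def using e by (simp add: field_simps)
  have 2: "Dx xi t x u q2 = 2" unfolding q2_def Dx_def using e by (simp add: field_simps)
  have "A2 t x = 4 * A2 t x" using F3[of t x u q1] F3[of t x u q2] 1 2 by simp
  then show False using A2nz[of t x] by simp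
qed

lemma xiX: "xi t x u = Xof xi t x"
proof -
  have "xi t x u = xi t x 0"
    using const_fun[of "\<lambda>v. xi t x v" u 0] smooth3_D3[OF smooth_xi] xi_u0 by metis
  then show ?thesis unfolding Xof_def .
qed

lemma xi_d: "d1 xi t x u = pt (Xof xi) t x" "d2 xi t x u = px (Xof xi) t x" "d3 xi = (\<lambda>t x u. 0)"
  "d2 (d2 xi) t x u = px (px (Xof xi)) t x" "d2 (d3 xi) t x u = 0" "d3 (d3 xi) t x u = 0"
proof -
  have e1: "(\<lambda>s. xi s x u) = (\<lambda>s. Xof xi s x)" for x u using xiX by (intro ext) simp
  have e2: "(\<lambda>y. xi t y u) = (\<lambda>y. Xof xi t y)" for t u using xiX by (intro ext) simp
  show "d1 xi t x u = pt (Xof xi) t x" unfolding d1_def pt_def e1 ..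
  show "d2 xi t x u = px (Xof xi) t x" unfolding d2_def px_def e2 ..
  show d3: "d3 xi = (\<lambda>t x u. 0)" using xi_u0 by (intro ext) simp
  have d2f: "d2 xi = (\<lambda>t x u. px (Xof xi) t x)" unfolding d2_def px_def e2 by (intro ext) simp
  show "d2 (d2 xi) t x u = px (px (Xof xi)) t x" unfolding d2f by (simp add: d2_def px_def)
  show "d2 (d3 xi) t x u = 0" unfolding d3 by (simp add: d2_def)
  show "d3 (d3 xi) t x u = 0" unfolding d3 by (simp add: d3_def)
qed

lemma Xx_nz: "px (Xof xi) t x \<noteq> 0" and Uu_nz: "d3 ups t x u \<noteq> 0"
  using J2nz[of t x u] by (auto simp: xi_d)

lemma A2'_rel: "A2' (Tof tau t) (Xof xi t x) = (px (Xof xi) t x)\<^sup>2 / deriv (Tof tau) t * A2 t x"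
proof -
  have "Dx xi t x 0 0 = px (Xof xi) t x" by (simp add: Dx_def xi_d)
  then have "(px (Xof xi) t x)\<^sup>2 * A2 t x = deriv (Tof tau) t * A2' (Tof tau t) (Xof xi t x)"
    using F3[of t x 0 0] Xx_nz[of t x] xiX[of t x 0] by simp
  then show ?thesis using Tnz[of t] by (simp add: field_simps)
qed

lemma F4:
  shows "d1 ups t x u * px (Xof xi) t x - pt (Xof xi) t x * Dx ups t x u q
     + deriv (Tof tau) t * C' (Tof tau t) (Xof xi t x) * ups t x u * Dx ups t x u q
     - A2 t x * px (Xof xi) t x * (d2 (d2 ups) t x u + 2 * q * d2 (d3 ups) t x u + q\<^sup>2 * d3 (d3 ups) t x u)
     - px (Xof xi) t x * C t x * u * q * d3 ups t x u
     + A2 t x * Dx ups t x u q * px (px (Xof xi)) t x = 0"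
proof -
  define a where "a = deriv (Tof tau) t"
  define dd where "dd = px (Xof xi) t x"
  define b where "b = pt (Xof xi) t x"
  define Xxx where "Xxx = px (px (Xof xi)) t x"
  define DxU where "DxU = Dx ups t x u q"
  define w0 where "w0 = (0 + C t x * u * q) / A2 t x"
  have a: "a \<noteq> 0" unfolding a_def by (rule Tnz)
  have dd: "dd \<noteq> 0" unfolding dd_def by (rule Xx_nz)
  have Dxi: "Dx xi t x u q = dd" by (simp add: Dx_def xi_d dd_def)
  have D: "Dj tau xi t x u 0 q \<noteq> 0" using a dd by (simp add: Dj_T Dxi a_def)
  have E: "iP tau xi ups t x u 0 q + C' (Tof tau t) (Xof xi t x) * ups t x u * iQ tau xi ups t x u 0 q
      = A2' (Tof tau t) (Xof xi t x) * iW tau xi ups t x u 0 q 0 0 w0"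
    using main_equiv[OF D, where w="w0" and r=0 and s=0] on_eq_w0[of t x u 0 q]
    unfolding w0_def on_eq_def tauT[of t x u] xiX[of t x u] by blast
  have P: "iP tau xi ups t x u 0 q = (d1 ups t x u * dd - b * DxU) / (a * dd)"
    unfolding iP_T Dxi a_def[symmetric] DxU_def by (simp add: Dt_def xi_d b_def)
  have Q: "iQ tau xi ups t x u 0 q = DxU / dd"
    unfolding iQ_T[OF Dxi[folded dd_def, unfolded dd_def, THEN ssubst[of _ _ "\<lambda>z. z \<noteq> 0"], OF Xx_nz]] Dxi DxU_def ..
  have W: "iW tau xi ups t x u 0 q 0 0 w0 = (d2 (d2 ups) t x u + 2 * q * d2 (d3 ups) t x u + q\<^sup>2 * d3 (d3 ups) t x u
        + w0 * d3 ups t x u - DxU / dd * Xxx) / dd\<^sup>2"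
    using iW_T[of t x u q 0 0 0 w0] Q dd unfolding Dxi by (simp add: Dxx_def xi_d(1,2,4,5,6) xi_u0 Xxx_def DxU_def)
  have A: "A2' (Tof tau t) (Xof xi t x) = dd\<^sup>2 / a * A2 t x" unfolding A2'_rel dd_def a_def ..
  have "(d1 ups t x u * dd - b * DxU) / (a * dd) + C' (Tof tau t) (Xof xi t x) * ups t x u * (DxU / dd)
     = dd\<^sup>2 / a * A2 t x * ((d2 (d2 ups) t x u + 2 * q * d2 (d3 ups) t x u + q\<^sup>2 * d3 (d3 ups) t x u
        + w0 * d3 ups t x u - DxU / dd * Xxx) / dd\<^sup>2)"
    using E unfolding P Q W A .
  note E2 = this
  have "d1 ups t x u * dd - b * DxU + a * C' (Tof tau t) (Xof xi t x) * ups t x u * DxU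
     = A2 t x * dd * (d2 (d2 ups) t x u + 2 * q * d2 (d3 ups) t x u + q\<^sup>2 * d3 (d3 ups) t x u
        + w0 * d3 ups t x u) - A2 t x * DxU * Xxx"
  proof -
    have ia: "inverse a * a = 1" using a by simp
    have id: "inverse dd * dd = 1" using dd by simp
    have id2: "inverse (dd\<^sup>2) = inverse dd * inverse dd" by (simp add: power2_eq_square)
    show ?thesis using E2 ia id unfolding divide_inverse id2 inverse_mult_distrib by algebra
  qed
  note E3 = this
  have iA: "inverse (A2 t x) * A2 t x = 1" using A2nz[of t x] by simp
  show ?thesis
    unfolding a_def[symmetric] dd_def[symmetric] b_def[symmetric] Xxx_def[symmetric] DxU_def[symmetric]
    using E3 iA unfolding w0_def divide_inverse by algebra
qed

lemma quad_coef:
  fixes A B Cc :: real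
  assumes "\<And>q. A + B * q + Cc * q\<^sup>2 = 0"
  shows "A = 0" "B = 0" "Cc = 0"
proof -
  have 0: "A = 0" using assms[of 0] by simp
  have 1: "A + B + Cc = 0" using assms[of 1] by simp
  have 2: "A - B + Cc = 0" using assms[of "-1"] by simp
  show "A = 0" "B = 0" "Cc = 0" using 0 1 2 by linarith+
qed

lemma F4coef:
  shows "d3 (d3 ups) t x u = 0"
    and "- pt (Xof xi) t x * d3 ups t x u + deriv (Tof tau) t * C' (Tof tau t) (Xof xi t x) * ups t x u * d3 ups t x u
         - 2 * A2 t x * px (Xof xi) t x * d2 (d3 ups) t x u - px (Xof xi) t x * C t x * u * d3 ups t x u
         + A2 t x * d3 ups t x u * px (px (Xof xi)) t x = 0"
    and "d1 ups t x u * px (Xof xi) t x - pt (Xof xi) t x * d2 ups t x u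
         + deriv (Tof tau) t * C' (Tof tau t) (Xof xi t x) * ups t x u * d2 ups t x u
         - A2 t x * px (Xof xi) t x * d2 (d2 ups) t x u + A2 t x * d2 ups t x u * px (px (Xof xi)) t x = 0"
proof -
  define A where "A = d1 ups t x u * px (Xof xi) t x - pt (Xof xi) t x * d2 ups t x u
         + deriv (Tof tau) t * C' (Tof tau t) (Xof xi t x) * ups t x u * d2 ups t x u
         - A2 t x * px (Xof xi) t x * d2 (d2 ups) t x u + A2 t x * d2 ups t x u * px (px (Xof xi)) t x"
  define B where "B = - pt (Xof xi) t x * d3 ups t x u + deriv (Tof tau) t * C' (Tof tau t) (Xof xi t x) * ups t x u * d3 ups t x u
         - 2 * A2 t x * px (Xof xi) t x * d2 (d3 ups) t x u - px (Xof xi) t x * C t x * u * d3 ups t x u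
         + A2 t x * d3 ups t x u * px (px (Xof xi)) t x"
  define Cc where "Cc = - A2 t x * px (Xof xi) t x * d3 (d3 ups) t x u"
  have "A + B * q + Cc * q\<^sup>2 = 0" for q
  proof -
    have "A + B * q + Cc * q\<^sup>2 = d1 ups t x u * px (Xof xi) t x - pt (Xof xi) t x * Dx ups t x u q
     + deriv (Tof tau) t * C' (Tof tau t) (Xof xi t x) * ups t x u * Dx ups t x u q
     - A2 t x * px (Xof xi) t x * (d2 (d2 ups) t x u + 2 * q * d2 (d3 ups) t x u + q\<^sup>2 * d3 (d3 ups) t x u)
     - px (Xof xi) t x * C t x * u * q * d3 ups t x u
     + A2 t x * Dx ups t x u q * px (px (Xof xi)) t x"
      unfolding A_def B_def Cc_def Dx_def by algebra
    then show ?thesis using F4[of t x u q] by simp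
  qed
  note c = quad_coef[OF this]
  show "d3 (d3 ups) t x u = 0" using c(3) A2nz[of t x] Xx_nz[of t x] unfolding Cc_def by simp
  show "- pt (Xof xi) t x * d3 ups t x u + deriv (Tof tau) t * C' (Tof tau t) (Xof xi t x) * ups t x u * d3 ups t x u
         - 2 * A2 t x * px (Xof xi) t x * d2 (d3 ups) t x u - px (Xof xi) t x * C t x * u * d3 ups t x u
         + A2 t x * d3 ups t x u * px (px (Xof xi)) t x = 0" using c(2) unfolding B_def .
  show "d1 ups t x u * px (Xof xi) t x - pt (Xof xi) t x * d2 ups t x u
         + deriv (Tof tau) t * C' (Tof tau t) (Xof xi t x) * ups t x u * d2 ups t x u
         - A2 t x * px (Xof xi) t x * d2 (d2 ups) t x u + A2 t x * d2 ups t x u * px (px (Xof xi)) t x = 0"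
    using c(1) unfolding A_def .
qed

lemma U1_const: "d3 ups t x u = U1of ups t x"
  unfolding U1of_def
  using const_fun[of "\<lambda>v. d3 ups t x v" u 0] smooth3_D3[OF smooth3_d(3)[OF smooth_ups]] F4coef(1) by metis

lemma ups_lin: "ups t x u = U1of ups t x * u + U0of ups t x"
proof -
  have "((\<lambda>v. ups t x v - U1of ups t x * v) has_real_derivative 0) (at v)" for v
  proof -
    have "((\<lambda>v. ups t x v - U1of ups t x * v) has_real_derivative (d3 ups t x v - U1of ups t x * 1)) (at v)"
      by (intro DERIV_diff DERIV_cmult smooth3_D3[OF smooth_ups] DERIV_ident)
    then show ?thesis using U1_const[of t x v] by simp
  qed
  then have "ups t x u - U1of ups t x * u = ups t x 0 - U1of ups t x * 0"
    using const_fun[of "\<lambda>v. ups t x v - U1of ups t x * v" u 0] by blast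
  then show ?thesis unfolding U0of_def by simp
qed

lemma smooth_U1: "smooth2 (U1of ups)" and smooth_U0: "smooth2 (U0of ups)"
proof -
  have "U1of ups = (\<lambda>t x. d3 ups t x 0)" by (intro ext) (simp add: U1of_def)
  then show "smooth2 (U1of ups)" using smooth3_smooth2[OF smooth3_d(3)[OF smooth_ups]] by simp
  have "U0of ups = (\<lambda>t x. ups t x 0)" by (intro ext) (simp add: U0of_def)
  then show "smooth2 (U0of ups)" using smooth3_smooth2[OF smooth_ups] by simp
qed

lemma ups_fun: "ups = (\<lambda>t x u. U1of ups t x * u + U0of ups t x)"
  using ups_lin by (intro ext) simp

lemma lin_deriv_t:
  assumes "smooth2 f" "smooth2 g"
  shows "deriv (\<lambda>s. f s x * u + g s x) t = pt f t x * u + pt g t x"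
proof -
  have "((\<lambda>s. f s x * u + g s x) has_real_derivative (pt f t x * u + pt g t x)) (at t)"
    by (intro DERIV_add DERIV_cmult_right smooth2_Dt assms)
  then show ?thesis by (rule DERIV_imp_deriv)
qed

lemma lin_deriv_x:
  assumes "smooth2 f" "smooth2 g"
  shows "deriv (\<lambda>y. f t y * u + g t y) x = px f t x * u + px g t x"
proof -
  have "((\<lambda>y. f t y * u + g t y) has_real_derivative (px f t x * u + px g t x)) (at x)"
    by (intro DERIV_add DERIV_cmult_right smooth2_Dx assms)
  then show ?thesis by (rule DERIV_imp_deriv)
qed

lemma ups_d: "d1 ups t x u = pt (U1of ups) t x * u + pt (U0of ups) t x"
  "d2 ups t x u = px (U1of ups) t x * u + px (U0of ups) t x"
  "d2 (d2 ups) t x u = px (px (U1of ups)) t x * u + px (px (U0of ups)) t x"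
  "d2 (d3 ups) t x u = px (U1of ups) t x"
  "d3 ups t x u = U1of ups t x"
  "ups t x u = U1of ups t x * u + U0of ups t x"
proof -
  have e1: "(\<lambda>s. ups s x u) = (\<lambda>s. U1of ups s x * u + U0of ups s x)" for x u using ups_lin by (intro ext) simp
  have e2: "(\<lambda>y. ups t y u) = (\<lambda>y. U1of ups t y * u + U0of ups t y)" for t u using ups_lin by (intro ext) simp
  show "d1 ups t x u = pt (U1of ups) t x * u + pt (U0of ups) t x"
    unfolding d1_def e1 by (rule lin_deriv_t[OF smooth_U1 smooth_U0])
  have d2e: "d2 ups t x u = px (U1of ups) t x * u + px (U0of ups) t x" for t x u
    unfolding d2_def e2 by (rule lin_deriv_x[OF smooth_U1 smooth_U0])
  then show "d2 ups t x u = px (U1of ups) t x * u + px (U0of ups) t x" .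
  have d2f: "d2 ups = (\<lambda>t x u. px (U1of ups) t x * u + px (U0of ups) t x)" using d2e by (intro ext) simp
  show "d2 (d2 ups) t x u = px (px (U1of ups)) t x * u + px (px (U0of ups)) t x"
    unfolding d2f d2_def[of "\<lambda>t x u. px (U1of ups) t x * u + px (U0of ups) t x"]
    by (rule lin_deriv_x[OF smooth2_d(2)[OF smooth_U1] smooth2_d(2)[OF smooth_U0]])
  have d3f: "d3 ups = (\<lambda>t x u. U1of ups t x)" using U1_const by (intro ext) simp
  show "d2 (d3 ups) t x u = px (U1of ups) t x" unfolding d3f by (simp add: d2_def px_def)
  show "d3 ups t x u = U1of ups t x" by (rule U1_const)
  show "ups t x u = U1of ups t x * u + U0of ups t x" by (rule ups_lin)
qed

lemma U1_nz: "U1of ups t x \<noteq> 0" using Uu_nz[of t x 0] by (simp add: U1of_def)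

lemma G12: "deriv (Tof tau) t * C' (Tof tau t) (Xof xi t x) * U1of ups t x = px (Xof xi) t x * C t x"
  and G12b: "- pt (Xof xi) t x * U1of ups t x + deriv (Tof tau) t * C' (Tof tau t) (Xof xi t x) * U0of ups t x * U1of ups t x
         - 2 * A2 t x * px (Xof xi) t x * px (U1of ups) t x + A2 t x * U1of ups t x * px (px (Xof xi)) t x = 0"
proof -
  define a where "a = deriv (Tof tau) t"
  define c where "c = C' (Tof tau t) (Xof xi t x)"
  define dd where "dd = px (Xof xi) t x"
  define b where "b = pt (Xof xi) t x"
  define Xxx where "Xxx = px (px (Xof xi)) t x"
  define V1 where "V1 = U1of ups t x"
  define V0 where "V0 = U0of ups t x"
  define V1x where "V1x = px (U1of ups) t x"
  have e: "(- b * V1 + a * c * V0 * V1 - 2 * A2 t x * dd * V1x + A2 t x * V1 * Xxx) + (a * c * V1 * V1 - dd * C t x * V1) * u + 0 * u\<^sup>2 = 0" for u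
  proof -
    have "(- b * V1 + a * c * V0 * V1 - 2 * A2 t x * dd * V1x + A2 t x * V1 * Xxx) + (a * c * V1 * V1 - dd * C t x * V1) * u + 0 * u\<^sup>2
      = - b * V1 + a * c * (V1 * u + V0) * V1 - 2 * A2 t x * dd * V1x - dd * C t x * u * V1 + A2 t x * V1 * Xxx"
      by algebra
    then show ?thesis using F4coef(2)[of t x u] unfolding ups_d a_def[symmetric] c_def[symmetric] dd_def[symmetric] b_def[symmetric]
      Xxx_def[symmetric] V1_def[symmetric] V0_def[symmetric] V1x_def[symmetric] by simp
  qed
  note q = quad_coef[OF e]
  have "V1 * (a * c * V1 - dd * C t x) = 0" using q(2) by algebra
  then show "deriv (Tof tau) t * C' (Tof tau t) (Xof xi t x) * U1of ups t x = px (Xof xi) t x * C t x"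
    using U1_nz[of t x] unfolding a_def c_def V1_def dd_def by simp
  show "- pt (Xof xi) t x * U1of ups t x + deriv (Tof tau) t * C' (Tof tau t) (Xof xi t x) * U0of ups t x * U1of ups t x
         - 2 * A2 t x * px (Xof xi) t x * px (U1of ups) t x + A2 t x * U1of ups t x * px (px (Xof xi)) t x = 0"
    using q(1) unfolding a_def c_def dd_def b_def Xxx_def V1_def V0_def V1x_def by simp
qed

lemma G3:
  "d1 ups t x u * px (Xof xi) t x - pt (Xof xi) t x * d2 ups t x u
         + deriv (Tof tau) t * C' (Tof tau t) (Xof xi t x) * ups t x u * d2 ups t x u
         - A2 t x * px (Xof xi) t x * d2 (d2 ups) t x u + A2 t x * d2 ups t x u * px (px (Xof xi)) t x = 0"
  by (rule F4coef(3))

lemma U1x0: "px (U1of ups) t x = 0"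
proof -
  define a where "a = deriv (Tof tau) t"
  define c where "c = C' (Tof tau t) (Xof xi t x)"
  define dd where "dd = px (Xof xi) t x"
  define b where "b = pt (Xof xi) t x"
  define Xxx where "Xxx = px (px (Xof xi)) t x"
  define V1 where "V1 = U1of ups t x"
  define V0 where "V0 = U0of ups t x"
  define V1x where "V1x = px (U1of ups) t x"
  define V0x where "V0x = px (U0of ups) t x"
  define V1t where "V1t = pt (U1of ups) t x"
  define V0t where "V0t = pt (U0of ups) t x"
  define V1xx where "V1xx = px (px (U1of ups)) t x"
  define V0xx where "V0xx = px (px (U0of ups)) t x"
  define AA where "AA = A2 t x"
  have e: "(V0t * dd - b * V0x + a * c * V0 * V0x - AA * dd * V0xx + AA * V0x * Xxx)
      + (V1t * dd - b * V1x + a * c * (V1 * V0x + V0 * V1x) - AA * dd * V1xx + AA * V1x * Xxx) * u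
      + (a * c * V1 * V1x) * u\<^sup>2 = 0" for u
  proof -
    have "(V0t * dd - b * V0x + a * c * V0 * V0x - AA * dd * V0xx + AA * V0x * Xxx)
      + (V1t * dd - b * V1x + a * c * (V1 * V0x + V0 * V1x) - AA * dd * V1xx + AA * V1x * Xxx) * u
      + (a * c * V1 * V1x) * u\<^sup>2
      = (V1t * u + V0t) * dd - b * (V1x * u + V0x) + a * c * (V1 * u + V0) * (V1x * u + V0x)
        - AA * dd * (V1xx * u + V0xx) + AA * (V1x * u + V0x) * Xxx"
      by algebra
    then show ?thesis using G3[of t x u] unfolding ups_d a_def[symmetric] c_def[symmetric] dd_def[symmetric] b_def[symmetric]
      Xxx_def[symmetric] V1_def[symmetric] V0_def[symmetric] V1x_def[symmetric] V0x_def[symmetric]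
      V1t_def[symmetric] V0t_def[symmetric] V1xx_def[symmetric] V0xx_def[symmetric] AA_def[symmetric] by simp
  qed
  note q = quad_coef[OF e]
  then show ?thesis using U1_nz[of t x] Tnz[of t] C'nz[of "Tof tau t" "Xof xi t x"]
    unfolding a_def c_def V1_def V1x_def by simp
qed

lemma U1xx0: "px (px (U1of ups)) t x = 0"
proof -
  have "px (U1of ups) = (\<lambda>t x. 0)" using U1x0 by (intro ext) simp
  then show ?thesis by (simp add: px_def)
qed

lemma G45: "pt (U1of ups) t x = - C t x * px (U0of ups) t x"
  "pt (U0of ups) t x = A2 t x * px (px (U0of ups)) t x"
  "pt (Xof xi) t x = A2 t x * px (px (Xof xi)) t x + U0of ups t x * C t x / U1of ups t x * px (Xof xi) t x"
proof -
  define a where "a = deriv (Tof tau) t"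
  define c where "c = C' (Tof tau t) (Xof xi t x)"
  define dd where "dd = px (Xof xi) t x"
  define b where "b = pt (Xof xi) t x"
  define Xxx where "Xxx = px (px (Xof xi)) t x"
  define V1 where "V1 = U1of ups t x"
  define V0 where "V0 = U0of ups t x"
  define V1x where "V1x = px (U1of ups) t x"
  define V0x where "V0x = px (U0of ups) t x"
  define V1t where "V1t = pt (U1of ups) t x"
  define V0t where "V0t = pt (U0of ups) t x"
  define V1xx where "V1xx = px (px (U1of ups)) t x"
  define V0xx where "V0xx = px (px (U0of ups)) t x"
  define AA where "AA = A2 t x"
  have e: "(V0t * dd - b * V0x + a * c * V0 * V0x - AA * dd * V0xx + AA * V0x * Xxx)
      + (V1t * dd - b * V1x + a * c * (V1 * V0x + V0 * V1x) - AA * dd * V1xx + AA * V1x * Xxx) * u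
      + (a * c * V1 * V1x) * u\<^sup>2 = 0" for u
  proof -
    have "(V0t * dd - b * V0x + a * c * V0 * V0x - AA * dd * V0xx + AA * V0x * Xxx)
      + (V1t * dd - b * V1x + a * c * (V1 * V0x + V0 * V1x) - AA * dd * V1xx + AA * V1x * Xxx) * u
      + (a * c * V1 * V1x) * u\<^sup>2
      = (V1t * u + V0t) * dd - b * (V1x * u + V0x) + a * c * (V1 * u + V0) * (V1x * u + V0x)
        - AA * dd * (V1xx * u + V0xx) + AA * (V1x * u + V0x) * Xxx"
      by algebra
    then show ?thesis using G3[of t x u] unfolding ups_d a_def[symmetric] c_def[symmetric] dd_def[symmetric] b_def[symmetric]
      Xxx_def[symmetric] V1_def[symmetric] V0_def[symmetric] V1x_def[symmetric] V0x_def[symmetric]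
      V1t_def[symmetric] V0t_def[symmetric] V1xx_def[symmetric] V0xx_def[symmetric] AA_def[symmetric] by simp
  qed
  note q = quad_coef[OF e]
  have V1x: "V1x = 0" unfolding V1x_def by (rule U1x0)
  have V1xx: "V1xx = 0" unfolding V1xx_def by (rule U1xx0)
  have g1: "a * c * V1 = dd * C t x" unfolding a_def c_def V1_def dd_def by (rule G12)
  have g2: "- b * V1 + a * c * V0 * V1 - 2 * AA * dd * V1x + AA * V1 * Xxx = 0"
    unfolding a_def c_def V1_def dd_def b_def V0_def AA_def V1x_def Xxx_def by (rule G12b)
  have V1nz: "V1 \<noteq> 0" unfolding V1_def by (rule U1_nz)
  have ddnz: "dd \<noteq> 0" unfolding dd_def by (rule Xx_nz)
  have bb: "b = a * c * V0 + AA * Xxx"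
  proof -
    have "V1 * (b - a * c * V0 - AA * Xxx) = 0" using g2 V1x by algebra
    then show ?thesis using V1nz by simp
  qed
  have "dd * (V1t + C t x * V0x) = 0" using q(2) V1x V1xx g1 by algebra
  then show "pt (U1of ups) t x = - C t x * px (U0of ups) t x" using ddnz unfolding V1t_def V0x_def by simp
  have "dd * (V0t - AA * V0xx) = 0" using q(1) bb by algebra
  then show "pt (U0of ups) t x = A2 t x * px (px (U0of ups)) t x" using ddnz unfolding V0t_def V0xx_def AA_def by simp
  have "V1 * (b - (AA * Xxx + V0 * C t x / V1 * dd)) = 0"
  proof -
    have "V1 * (V0 * C t x / V1 * dd) = V0 * dd * C t x" using V1nz by simp
    then show ?thesis using bb g1 by (simp add: right_diff_distrib distrib_left) algebra
  qed
  then show "pt (Xof xi) t x = A2 t x * px (px (Xof xi)) t x + U0of ups t x * C t x / U1of ups t x * px (Xof xi) t x"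
    using V1nz unfolding b_def AA_def Xxx_def V0_def V1_def dd_def by simp
qed

lemma smooth_A2: "smooth2 A2" and smooth_C: "smooth2 C"
  using L by (auto simp: in_class_L1_def in_class_L_def)

lemma U1_x: "U1of ups t x = U1of ups t 0"
  using const_fun[of "\<lambda>y. U1of ups t y" x 0] smooth2_Dx[OF smooth_U1] U1x0 by metis

lemma U1t_x: "pt (U1of ups) t x = pt (U1of ups) t 0"
proof -
  have "(\<lambda>s. U1of ups s x) = (\<lambda>s. U1of ups s 0)" using U1_x by (intro ext) simp
  then show ?thesis unfolding pt_def by simp
qed

lemma U0x_form: "px (U0of ups) t x = - pt (U1of ups) t 0 / C t x"
  using G45(1)[of t x] Cnz[of t x] U1t_x[of t x] by (simp add: field_simps)

lemma K_diff: "(\<lambda>y. A2 t y * px C t y / (C t y)\<^sup>2) differentiable (at x)"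
  unfolding real_differentiable_def
  by (rule exI, (rule derivative_eq_intros smooth2_Dx smooth_A2 smooth_C smooth2_d(2)[OF smooth_C] refl | use Cnz in simp)+)

lemma V1t_zero: "pt (U1of ups) t 0 = 0"
proof (rule ccontr)
  define V1 where "V1 = pt (U1of ups) t 0"
  define V2 where "V2 = pt (pt (U1of ups)) t 0"
  define K where "K = (\<lambda>t' x'. A2 t' x' * px C t' x' / (C t' x')\<^sup>2)"
  assume nz: "pt (U1of ups) t 0 \<noteq> 0"
  then have V1nz: "V1 \<noteq> 0" unfolding V1_def .
  have key: "V1 * L1_expr A2 C t x = V2" for x
  proof -
    have clair: "pt (px (U0of ups)) t x = px (pt (U0of ups)) t x" by (rule clairaut[OF smooth_U0])
    have pxU0: "px (U0of ups) = (\<lambda>s y. - pt (U1of ups) s 0 / C s y)" using U0x_form by (intro ext) simp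
    have lhs: "pt (px (U0of ups)) t x = - ((V2 * C t x - V1 * pt C t x) / (C t x * C t x))"
    proof -
      have "((\<lambda>s. - pt (U1of ups) s 0 / C s x) has_real_derivative
           - ((pt (pt (U1of ups)) t 0 * C t x - pt (U1of ups) t 0 * pt C t x) / (C t x * C t x))) (at t)"
        by (rule derivative_eq_intros smooth2_Dt smooth_C smooth2_d(1)[OF smooth_U1] refl | use Cnz in \<open>simp add: field_simps power2_eq_square\<close>)+
      then show ?thesis unfolding pxU0 pt_def[of "\<lambda>s y. - pt (U1of ups) s 0 / C s y"] V1_def V2_def
        by (rule DERIV_imp_deriv)
    qed
    have pxpx: "px (px (U0of ups)) t y = V1 * px C t y / (C t y)\<^sup>2" for y
    proof -
      have "((\<lambda>y. - pt (U1of ups) t 0 / C t y) has_real_derivative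
           - ((0 * C t y - pt (U1of ups) t 0 * px C t y) / (C t y * C t y))) (at y)"
        by (rule derivative_eq_intros smooth2_Dx smooth_C refl | use Cnz in \<open>simp add: field_simps power2_eq_square\<close>)+
      then have "px (px (U0of ups)) t y = - ((0 * C t y - pt (U1of ups) t 0 * px C t y) / (C t y * C t y))"
        unfolding pxU0 px_def[of "\<lambda>s y. - pt (U1of ups) s 0 / C s y"] by (rule DERIV_imp_deriv)
      then show ?thesis unfolding V1_def by (simp add: power2_eq_square)
    qed
    have ptU0: "(\<lambda>y. pt (U0of ups) t y) = (\<lambda>y. V1 * K t y)"
      using G45(2) pxpx unfolding K_def by (intro ext) (simp add: field_simps)
    have rhs: "px (pt (U0of ups)) t x = V1 * px K t x"
    proof -
      have "((\<lambda>y. K t y) has_real_derivative px K t x) (at x)"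
        using K_diff[of t x] unfolding K_def px_def by (simp add: DERIV_deriv_iff_real_differentiable)
      then have "((\<lambda>y. V1 * K t y) has_real_derivative V1 * px K t x) (at x)" by (rule DERIV_cmult)
      then show ?thesis unfolding px_def[of "pt (U0of ups)"] ptU0 by (rule DERIV_imp_deriv)
    qed
    have "- ((V2 * C t x - V1 * pt C t x) / (C t x * C t x)) = V1 * px K t x"
      using clair lhs rhs by simp
    then have "V1 * (pt C t x / C t x - C t x * px K t x) = V2"
      using Cnz[of t x] by (simp add: field_simps)
    then show ?thesis unfolding L1_expr_def K_def by simp
  qed
  have "L1_expr A2 C t y = V2 / V1" for y using key[of y] V1nz by (simp add: field_simps)
  then have "(\<lambda>y. L1_expr A2 C t y) = (\<lambda>y. V2 / V1)" by (intro ext)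
  then have "px (L1_expr A2 C) t 0 = 0" unfolding px_def by simp
  then show False using L unfolding in_class_L1_def by blast
qed

lemma U1_c: "U1of ups t x = U1of ups 0 0"
proof -
  have "U1of ups t 0 = U1of ups 0 0"
    using const_fun[of "\<lambda>s. U1of ups s 0" t 0] smooth2_Dt[OF smooth_U1] V1t_zero by metis
  then show ?thesis using U1_x[of t x] by simp
qed

lemma U0x0: "px (U0of ups) t x = 0" using U0x_form V1t_zero by simp

lemma U0_c: "U0of ups t x = U0of ups 0 0"
proof -
  have x: "U0of ups t x = U0of ups t 0" for t x
    using const_fun[of "\<lambda>y. U0of ups t y" x 0] smooth2_Dx[OF smooth_U0] U0x0 by metis
  have "px (U0of ups) = (\<lambda>t x. 0)" using U0x0 by (intro ext) simp
  then have "px (px (U0of ups)) t x = 0" for t x by (simp add: px_def)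
  then have "pt (U0of ups) t x = 0" for t x using G45(2) by simp
  then have "U0of ups t 0 = U0of ups 0 0"
    using const_fun[of "\<lambda>s. U0of ups s 0" t 0] smooth2_Dt[OF smooth_U0] by metis
  then show ?thesis using x[of t x] by simp
qed

lemma forward:
  "\<exists>T X U0 U1. smooth1 T \<and> smooth2 X \<and>
       (\<forall>t x u. tau t x u = T t \<and> xi t x u = X t x \<and> ups t x u = U1 * u + U0) \<and>
       (\<forall>t x. deriv T t * px X t x * U1 \<noteq> 0) \<and>
       (\<forall>t x. pt X t x = A2 t x * px (px X) t x + U0 * C t x / U1 * px X t x) \<and>
       (\<forall>t x. C' (T t) (X t x) = px X t x / (deriv T t * U1) * C t x) \<and>
       (\<forall>t x. A2' (T t) (X t x) = (px X t x)\<^sup>2 / deriv T t * A2 t x)"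
proof (intro exI conjI allI)
  define c1 where "c1 = U1of ups 0 0"
  define c0 where "c0 = U0of ups 0 0"
  have Tf: "Tof tau = (\<lambda>t. tau t 0 0)" by (intro ext) (simp add: Tof_def)
  show "smooth1 (Tof tau)" unfolding Tf by (rule smooth3_smooth1[OF smooth_tau])
  have Xf: "Xof xi = (\<lambda>t x. xi t x 0)" by (intro ext) (simp add: Xof_def)
  show "smooth2 (Xof xi)" unfolding Xf by (rule smooth3_smooth2[OF smooth_xi])
  fix t x
  have c1: "U1of ups t x = c1" unfolding c1_def by (rule U1_c)
  have c0: "U0of ups t x = c0" unfolding c0_def by (rule U0_c)
  have c1nz: "c1 \<noteq> 0" using U1_nz[of t x] c1 by simp
  show "deriv (Tof tau) t * px (Xof xi) t x * c1 \<noteq> 0" using Tnz[of t] Xx_nz[of t x] c1nz by simp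
  show "pt (Xof xi) t x = A2 t x * px (px (Xof xi)) t x + c0 * C t x / c1 * px (Xof xi) t x"
    using G45(3)[of t x] c0 c1 by simp
  show "C' (Tof tau t) (Xof xi t x) = px (Xof xi) t x / (deriv (Tof tau) t * c1) * C t x"
    using G12[of t x] c1 c1nz Tnz[of t] by (simp add: field_simps)
  show "A2' (Tof tau t) (Xof xi t x) = (px (Xof xi) t x)\<^sup>2 / deriv (Tof tau) t * A2 t x"
    by (rule A2'_rel)
  fix u
  show "tau t x u = Tof tau t" by (rule tauT)
  show "xi t x u = Xof xi t x" by (rule xiX)
  show "ups t x u = c1 * u + c0" using ups_lin[of t x u] c0 c1 by simp
qed

end
lemma backward:
  fixes A2 C A2' C' :: "real \<Rightarrow> real \<Rightarrow> real"
    and tau xi ups :: "real \<Rightarrow> real \<Rightarrow> real \<Rightarrow> real"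
  assumes forms: "\<forall>t x u. tau t x u = T t \<and> xi t x u = X t x \<and> ups t x u = U1 * u + U0"
    and nz: "\<forall>t x. deriv T t * px X t x * U1 \<noteq> 0"
    and kol: "\<forall>t x. pt X t x = A2 t x * px (px X) t x + U0 * C t x / U1 * px X t x"
    and Crel: "\<forall>t x. C' (T t) (X t x) = px X t x / (deriv T t * U1) * C t x"
    and Arel: "\<forall>t x. A2' (T t) (X t x) = (px X t x)\<^sup>2 / deriv T t * A2 t x"
  shows "maps_eq tau xi ups A2 C A2' C'"
proof -
  have tf: "tau = (\<lambda>t x u. T t)" and xf: "xi = (\<lambda>t x u. X t x)" and uf: "ups = (\<lambda>t x u. U1 * u + U0)"
    using forms by (auto intro!: ext)
  have d3u: "d3 ups = (\<lambda>t x u. U1)"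
  proof (intro ext)
    fix t x u
    have "((\<lambda>v. U1 * v + U0) has_real_derivative U1 * 1 + 0) (at u)"
      by (intro DERIV_add DERIV_cmult DERIV_ident DERIV_const)
    then show "d3 ups t x u = U1" unfolding uf d3_def by (simp add: DERIV_imp_deriv)
  qed
  have d12u: "d1 ups = (\<lambda>t x u. 0)" "d2 ups = (\<lambda>t x u. 0)" unfolding uf by (auto intro!: ext simp: d1_def d2_def)
  have dt: "d1 tau t x u = deriv T t" "d2 tau = (\<lambda>t x u. 0)" "d3 tau = (\<lambda>t x u. 0)" for t x u
    unfolding tf by (auto intro!: ext simp: d1_def d2_def d3_def)
  have dx: "d1 xi t x u = pt X t x" "d2 xi t x u = px X t x" "d3 xi = (\<lambda>t x u. 0)" for t x u
    unfolding xf by (auto intro!: ext simp: d1_def d2_def d3_def pt_def px_def)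
  have d2x: "d2 xi = (\<lambda>t x u. px X t x)" unfolding xf by (auto intro!: ext simp: d2_def px_def)
  have DD: "Dt tau t x u p = deriv T t" "Dx tau t x u q = 0" "Dt xi t x u p = pt X t x" "Dx xi t x u q = px X t x"
    "Dt ups t x u p = U1 * p" "Dx ups t x u q = U1 * q" "Dxx tau t x u q w = 0"
    "Dxx xi t x u q w = px (px X) t x" "Dxx ups t x u q w = U1 * w" for t x u p q w
    unfolding Dt_def Dx_def Dxx_def dt dx d2x d3u d12u by (simp_all add: d1_def d2_def d3_def px_def)
  show ?thesis unfolding maps_eq_def
  proof (intro allI impI)
    fix t x u p q r s w t' x' u' p' q' r' s' w'
    assume pr: "prolong_rel tau xi ups t x u p q r s w t' x' u' p' q' r' s' w'"
    define a where "a = deriv T t"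
    define dd where "dd = px X t x"
    define b where "b = pt X t x"
    define Xxx where "Xxx = px (px X) t x"
    have a: "a \<noteq> 0" and dd: "dd \<noteq> 0" and U1: "U1 \<noteq> 0" using nz unfolding a_def dd_def by auto
    have tx: "t' = T t" "x' = X t x" "u' = U1 * u + U0" using pr forms unfolding prolong_rel_def by auto
    have e4: "U1 * p = p' * a + q' * b" and e5: "U1 * q = q' * dd" and e8: "U1 * w = w' * dd\<^sup>2 + q' * Xxx"
      using pr unfolding prolong_rel_def DD a_def b_def dd_def Xxx_def by auto
    have ia: "inverse a * a = 1" using a by simp
    have iU: "inverse U1 * U1 = 1" using U1 by simp
    have bk: "b = A2 t x * Xxx + U0 * C t x * inverse U1 * dd"
      using kol unfolding b_def Xxx_def dd_def by (simp add: divide_inverse)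
    have Cr: "C' t' x' = dd * inverse a * inverse U1 * C t x"
      using Crel unfolding tx a_def dd_def by (simp add: divide_inverse)
    have Ar: "A2' t' x' = dd\<^sup>2 * inverse a * A2 t x"
      using Arel unfolding tx a_def dd_def by (simp add: divide_inverse)
    have id: "a * (p' + C' t' x' * u' * q' - A2' t' x' * w') = U1 * (p + C t x * u * q - A2 t x * w)"
      unfolding Cr Ar tx(3) using e4 e5 e8 ia iU bk by algebra
    show "on_eq A2 C t x u p q w = on_eq A2' C' t' x' u' p' q' w'"
    proof -
      have "on_eq A2 C t x u p q w \<longleftrightarrow> U1 * (p + C t x * u * q - A2 t x * w) = 0"
        using U1 by (simp add: on_eq_def)
      also have "\<dots> \<longleftrightarrow> a * (p' + C' t' x' * u' * q' - A2' t' x' * w') = 0" using id by simp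
      also have "\<dots> \<longleftrightarrow> on_eq A2' C' t' x' u' p' q' w'" using a by (simp add: on_eq_def)
      finally show ?thesis .
    qed
  qed
qed


theorem proposition9:
  fixes A2 C A2' C' :: "real \<Rightarrow> real \<Rightarrow> real"
    and tau xi ups :: "real \<Rightarrow> real \<Rightarrow> real \<Rightarrow> real"
  assumes "in_class_L1 A2 C" and "in_class_L1 A2' C'"
    and "point_transformation tau xi ups"
  shows "maps_eq tau xi ups A2 C A2' C' \<longleftrightarrow>
    (\<exists>T X U0 U1. smooth1 T \<and> smooth2 X \<and>
       (\<forall>t x u. tau t x u = T t \<and> xi t x u = X t x \<and> ups t x u = U1 * u + U0) \<and>
       (\<forall>t x. deriv T t * px X t x * U1 \<noteq> 0) \<and>
       (\<forall>t x. pt X t x = A2 t x * px (px X) t x + U0 * C t x / U1 * px X t x) \<and>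
       (\<forall>t x. C' (T t) (X t x) = px X t x / (deriv T t * U1) * C t x) \<and>
       (\<forall>t x. A2' (T t) (X t x) = (px X t x)\<^sup>2 / deriv T t * A2 t x))"
proof
  assume "maps_eq tau xi ups A2 C A2' C'"
  then show "\<exists>T X U0 U1. smooth1 T \<and> smooth2 X \<and>
       (\<forall>t x u. tau t x u = T t \<and> xi t x u = X t x \<and> ups t x u = U1 * u + U0) \<and>
       (\<forall>t x. deriv T t * px X t x * U1 \<noteq> 0) \<and>
       (\<forall>t x. pt X t x = A2 t x * px (px X) t x + U0 * C t x / U1 * px X t x) \<and>
       (\<forall>t x. C' (T t) (X t x) = px X t x / (deriv T t * U1) * C t x) \<and>
       (\<forall>t x. A2' (T t) (X t x) = (px X t x)\<^sup>2 / deriv T t * A2 t x)"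
    using forward[OF assms(1) assms(2) assms(3)] by blast
next
  assume "\<exists>T X U0 U1. smooth1 T \<and> smooth2 X \<and>
       (\<forall>t x u. tau t x u = T t \<and> xi t x u = X t x \<and> ups t x u = U1 * u + U0) \<and>
       (\<forall>t x. deriv T t * px X t x * U1 \<noteq> 0) \<and>
       (\<forall>t x. pt X t x = A2 t x * px (px X) t x + U0 * C t x / U1 * px X t x) \<and>
       (\<forall>t x. C' (T t) (X t x) = px X t x / (deriv T t * U1) * C t x) \<and>
       (\<forall>t x. A2' (T t) (X t x) = (px X t x)\<^sup>2 / deriv T t * A2 t x)"
  then obtain T X U0 U1 where
    f: "\<forall>t x u. tau t x u = T t \<and> xi t x u = X t x \<and> ups t x u = U1 * u + U0"
    and n: "\<forall>t x. deriv T t * px X t x * U1 \<noteq> 0"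
    and k: "\<forall>t x. pt X t x = A2 t x * px (px X) t x + U0 * C t x / U1 * px X t x"
    and c: "\<forall>t x. C' (T t) (X t x) = px X t x / (deriv T t * U1) * C t x"
    and a: "\<forall>t x. A2' (T t) (X t x) = (px X t x)\<^sup>2 / deriv T t * A2 t x"
    by blast
  show "maps_eq tau xi ups A2 C A2' C'" by (rule backward[OF f n k c a])
qed

end
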